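(* Let $\mathcal{A}$ be a $\tau^*_{\mathrm{tup}}$-structure which is a model of $T_{\mathrm{tup}}$ and whose $M$-sort (as a $\tau$-structure) is $\mathcal{M}$. Then there is a unique embedding $e$ of the $\tau_{\mathrm{tup}}$-structure $\mathcal{M}^{<\mathbb{N}}$ into (the $\tau_{\mathrm{tup}}$-reduct of) $\mathcal{A}$ which is the identity on the sort $M$; moreover $e$ is an embedding of $(\mathcal{M}^{<\mathbb{N}},R',g')$ into $\mathcal{A}$, where $R'=\{n\in\mathbb{N}: e(n)\in R^{\mathcal{A}}\}$ and $g'(n,\pi)=g^{\mathcal{A}}(e(n),e(\pi))$. Furthermore, identifying $\mathcal{M}^{<\mathbb{N}}$ with its image under $e$: the $N$-sort of $\mathcal{A}$ is an end extension of $\mathbb{N}$, and every element $\pi$ of the $M_{\mathrm{tup}}$-sort of $\mathcal{A}$ with $|\pi|\in\mathbb{N}$ belongs to $M^{<\mathbb{N}}$.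
   Context: Fix a countable language $\tau$. $\tau_{\mathrm{tup}}$ is the three-sorted language with sorts $M$ (carrying the symbols of $\tau$), $N$ (carrying the language of arithmetic $0,1,+,\cdot,<$), and $M_{\mathrm{tup}}$, together with a function $|\cdot|:M_{\mathrm{tup}}\to N$ and a relation $\mathrm{ind}\subseteq M_{\mathrm{tup}}\times N\times M$ ("the $i$-th entry of $\pi$ is $m$"). $\tau^*_{\mathrm{tup}}=\tau_{\mathrm{tup}}\cup\{R,g\}$ with $R$ a unary relation on $N$ and $g:N\times M_{\mathrm{tup}}\to M$ a binary function. $T_{\mathrm{tup}}$ is the theory stating: the $N$-sort satisfies $PA^-$ (Peano arithmetic without induction, i.e. the finitely axiomatized theory of non-negative parts of discretely ordered rings); (a) $\mathrm{ind}(\pi,i,m)\to i<|\pi|$; (b) $\mathrm{ind}(\pi,i,m)\wedge\mathrm{ind}(\pi,i,m')\to m=m'$; (c) $i<|\pi|\to\exists m\,\mathrm{ind}(\pi,i,m)$; (d) if $|\pi|=|\rho|$ and for all $i<|\pi|$ there is $m$ with $\mathrm{ind}(\pi,i,m)\wedge\mathrm{ind}(\rho,i,m)$, then $\pi=\rho$; (e) some $\pi$ has $|\pi|=0$; (f) for all $\pi,m$ there is $\rho$ with $|\rho|=|\pi|+1$, $\mathrm{ind}(\rho,|\pi|,m)$ and $\mathrm{ind}(\pi,i,m')\leftrightarrow\mathrm{ind}(\rho,i,m')$ for all $i<|\pi|$, $m'$; (g) for all $\pi$ with $|\pi|\ge1$ there is $\rho$ with $|\rho|=|\pi|-1$ and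 $\mathrm{ind}(\pi,i,m)\leftrightarrow\mathrm{ind}(\rho,i,m)$ for all $i<|\rho|$, $m$. For a $\tau$-structure $\mathcal{M}$ with domain $M$, $\mathcal{M}^{<\mathbb{N}}=(\mathcal{M},\mathbb{N},M^{<\mathbb{N}})$ is the $\tau_{\mathrm{tup}}$-structure with the standard natural numbers and all finite tuples from $M$, with the natural length and indexing. *)

theory Defs
  imports "HOL-Library.Countable"
begin

text \<open>A tau_tup-structure has sorts 'm (M), 'n (N), 't (M_tup).\<close>

record ('r,'f,'m,'n,'t) tup_str =
  trel  :: "'r \<Rightarrow> 'm list \<Rightarrow> bool"
  tfun  :: "'f \<Rightarrow> 'm list \<Rightarrow> 'm"
  nzero :: "'n"
  none  :: "'n"
  nplus :: "'n \<Rightarrow> 'n \<Rightarrow> 'n"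
  ntimes :: "'n \<Rightarrow> 'n \<Rightarrow> 'n"
  nless :: "'n \<Rightarrow> 'n \<Rightarrow> bool"
  len   :: "'t \<Rightarrow> 'n"
  ind   :: "'t \<Rightarrow> 'n \<Rightarrow> 'm \<Rightarrow> bool"

record ('r,'f,'m,'n,'t) tup_star = "('r,'f,'m,'n,'t) tup_str" +
  Rel :: "'n \<Rightarrow> bool"
  gfun :: "'n \<Rightarrow> 't \<Rightarrow> 'm"

text \<open>PA minus (Kaye's axioms) on the N-sort.\<close>
definition PA_minus :: "('r,'f,'m,'n,'t,'z) tup_str_scheme \<Rightarrow> bool" where
  "PA_minus A \<longleftrightarrow>
    (let z = nzero A; u = none A; p = nplus A; t = ntimes A; l = nless A in
     (\<forall>x y w. p (p x y) w = p x (p y w)) \<and>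
     (\<forall>x y. p x y = p y x) \<and>
     (\<forall>x y w. t (t x y) w = t x (t y w)) \<and>
     (\<forall>x y. t x y = t y x) \<and>
     (\<forall>x y w. t x (p y w) = p (t x y) (t x w)) \<and>
     (\<forall>x. p x z = x \<and> t x z = z) \<and>
     (\<forall>x. t x u = x) \<and>
     (\<forall>x y w. l x y \<and> l y w \<longrightarrow> l x w) \<and>
     (\<forall>x. \<not> l x x) \<and>
     (\<forall>x y. l x y \<or> x = y \<or> l y x) \<and>
     (\<forall>x y w. l x y \<longrightarrow> l (p x w) (p y w)) \<and>
     (\<forall>x y w. l z w \<and> l x y \<longrightarrow> l (t x w) (t y w)) \<and>
     (\<forall>x y. l x y \<longrightarrow> (\<exists>w. p x w = y)) \<and>
     (l z u \<and> (\<forall>x. l z x \<longrightarrow> (l u x \<or> u = x))) \<and>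
     (\<forall>x. l z x \<or> z = x))"

definition T_tup :: "('r,'f,'m,'n,'t,'z) tup_str_scheme \<Rightarrow> bool" where
  "T_tup A \<longleftrightarrow> PA_minus A \<and>
    (\<forall>\<pi> i m. ind A \<pi> i m \<longrightarrow> nless A i (len A \<pi>)) \<and>
    (\<forall>\<pi> i m m'. ind A \<pi> i m \<and> ind A \<pi> i m' \<longrightarrow> m = m') \<and>
    (\<forall>\<pi> i. nless A i (len A \<pi>) \<longrightarrow> (\<exists>m. ind A \<pi> i m)) \<and>
    (\<forall>\<pi> \<rho>. len A \<pi> = len A \<rho> \<and>
        (\<forall>i. nless A i (len A \<pi>) \<longrightarrow> (\<exists>m. ind A \<pi> i m \<and> ind A \<rho> i m)) \<longrightarrow> \<pi> = \<rho>) \<and>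
    (\<exists>\<pi>. len A \<pi> = nzero A) \<and>
    (\<forall>\<pi> m. \<exists>\<rho>. len A \<rho> = nplus A (len A \<pi>) (none A) \<and> ind A \<rho> (len A \<pi>) m \<and>
        (\<forall>i m'. nless A i (len A \<pi>) \<longrightarrow> (ind A \<pi> i m' \<longleftrightarrow> ind A \<rho> i m'))) \<and>
    (\<forall>\<pi>. (nless A (none A) (len A \<pi>) \<or> none A = len A \<pi>) \<longrightarrow>
        (\<exists>\<rho>. nplus A (len A \<rho>) (none A) = len A \<pi> \<and>
           (\<forall>i m. nless A i (len A \<rho>) \<longrightarrow> (ind A \<pi> i m \<longleftrightarrow> ind A \<rho> i m))))"

definition std_tup :: "('r \<Rightarrow> 'm list \<Rightarrow> bool) \<Rightarrow> ('f \<Rightarrow> 'm list \<Rightarrow> 'm)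
    \<Rightarrow> ('r,'f,'m,nat,'m list) tup_str" where
  "std_tup Rm Fm = \<lparr> trel = Rm, tfun = Fm, nzero = 0, none = 1, nplus = (+), ntimes = (*),
     nless = (<), len = length, ind = (\<lambda>xs i m. i < length xs \<and> xs ! i = m) \<rparr>"

definition std_star :: "('r \<Rightarrow> 'm list \<Rightarrow> bool) \<Rightarrow> ('f \<Rightarrow> 'm list \<Rightarrow> 'm)
    \<Rightarrow> (nat \<Rightarrow> bool) \<Rightarrow> (nat \<Rightarrow> 'm list \<Rightarrow> 'm) \<Rightarrow> ('r,'f,'m,nat,'m list) tup_star" where
  "std_star Rm Fm R g = \<lparr> trel = Rm, tfun = Fm, nzero = 0, none = 1, nplus = (+), ntimes = (*),
     nless = (<), len = length, ind = (\<lambda>xs i m. i < length xs \<and> xs ! i = m), Rel = R, gfun = g \<rparr>"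

text \<open>An embedding of tau_tup-structures which is the identity on the M-sort, given by its
components eN on the N-sort and eT on the M_tup-sort (only the tau_tup symbols are used).\<close>
definition tup_emb :: "('r,'f,'m,'n1,'t1,'x) tup_str_scheme \<Rightarrow> ('r,'f,'m,'n2,'t2,'y) tup_str_scheme
    \<Rightarrow> ('n1 \<Rightarrow> 'n2) \<Rightarrow> ('t1 \<Rightarrow> 't2) \<Rightarrow> bool" where
  "tup_emb S A eN eT \<longleftrightarrow> inj eN \<and> inj eT \<and>
     (\<forall>r xs. trel S r xs \<longleftrightarrow> trel A r xs) \<and>
     (\<forall>f xs. tfun S f xs = tfun A f xs) \<and>
     eN (nzero S) = nzero A \<and> eN (none S) = none A \<and>
     (\<forall>a b. eN (nplus S a b) = nplus A (eN a) (eN b)) \<and>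
     (\<forall>a b. eN (ntimes S a b) = ntimes A (eN a) (eN b)) \<and>
     (\<forall>a b. nless S a b \<longleftrightarrow> nless A (eN a) (eN b)) \<and>
     (\<forall>\<pi>. eN (len S \<pi>) = len A (eT \<pi>)) \<and>
     (\<forall>\<pi> i m. ind S \<pi> i m \<longleftrightarrow> ind A (eT \<pi>) (eN i) m)"

definition star_emb :: "('r,'f,'m,'n1,'t1,'x) tup_star_scheme \<Rightarrow> ('r,'f,'m,'n2,'t2,'y) tup_star_scheme
    \<Rightarrow> ('n1 \<Rightarrow> 'n2) \<Rightarrow> ('t1 \<Rightarrow> 't2) \<Rightarrow> bool" where
  "star_emb S A eN eT \<longleftrightarrow> tup_emb S A eN eT \<and>
     (\<forall>n. Rel S n \<longleftrightarrow> Rel A (eN n)) \<and>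
     (\<forall>n \<pi>. gfun S n \<pi> = gfun A (eN n) (eT \<pi>))"

end

theory Submission
  imports Defs
begin

primrec natN :: "('r,'f,'m,'n,'t,'z) tup_str_scheme \<Rightarrow> nat \<Rightarrow> 'n" where
  "natN A 0 = nzero A"
| "natN A (Suc k) = nplus A (natN A k) (none A)"

context
  fixes A :: "('r,'f,'m,'n,'t,'z) tup_str_scheme"
  assumes PA: "PA_minus A"
begin

lemma PA_all: "(\<forall>x y w. nplus A (nplus A x y) w = nplus A x (nplus A y w)) \<and>
     (\<forall>x y. nplus A x y = nplus A y x) \<and>
     (\<forall>x y w. ntimes A (ntimes A x y) w = ntimes A x (ntimes A y w)) \<and>
     (\<forall>x y. ntimes A x y = ntimes A y x) \<and>
     (\<forall>x y w. ntimes A x (nplus A y w) = nplus A (ntimes A x y) (ntimes A x w)) \<and>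
     (\<forall>x. nplus A x (nzero A) = x \<and> ntimes A x (nzero A) = nzero A) \<and>
     (\<forall>x. ntimes A x (none A) = x) \<and>
     (\<forall>x y w. nless A x y \<and> nless A y w \<longrightarrow> nless A x w) \<and>
     (\<forall>x. \<not> nless A x x) \<and>
     (\<forall>x y. nless A x y \<or> x = y \<or> nless A y x) \<and>
     (\<forall>x y w. nless A x y \<longrightarrow> nless A (nplus A x w) (nplus A y w)) \<and>
     (\<forall>x y w. nless A (nzero A) w \<and> nless A x y \<longrightarrow> nless A (ntimes A x w) (ntimes A y w)) \<and>
     (\<forall>x y. nless A x y \<longrightarrow> (\<exists>w. nplus A x w = y)) \<and>
     (nless A (nzero A) (none A) \<and> (\<forall>x. nless A (nzero A) x \<longrightarrow> (nless A (none A) x \<or> none A = x))) \<and>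
     (\<forall>x. nless A (nzero A) x \<or> nzero A = x)"
  using PA unfolding PA_minus_def Let_def .

lemmas padd_assoc_raw = PA_all[THEN conjunct1]
lemmas padd_comm_raw = PA_all[THEN conjunct2, THEN conjunct1]
lemmas pmul_assoc_raw = PA_all[THEN conjunct2, THEN conjunct2, THEN conjunct1]
lemmas pmul_comm_raw = PA_all[THEN conjunct2, THEN conjunct2, THEN conjunct2, THEN conjunct1]
lemmas pdistr_raw = PA_all[THEN conjunct2, THEN conjunct2, THEN conjunct2, THEN conjunct2, THEN conjunct1]
lemmas padd0mul0_raw = PA_all[THEN conjunct2, THEN conjunct2, THEN conjunct2, THEN conjunct2, THEN conjunct2, THEN conjunct1]
lemmas pmul1_raw = PA_all[THEN conjunct2, THEN conjunct2, THEN conjunct2, THEN conjunct2, THEN conjunct2, THEN conjunct2, THEN conjunct1]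
lemmas ptrans_raw = PA_all[THEN conjunct2, THEN conjunct2, THEN conjunct2, THEN conjunct2, THEN conjunct2, THEN conjunct2, THEN conjunct2, THEN conjunct1]
lemmas pirr_raw = PA_all[THEN conjunct2, THEN conjunct2, THEN conjunct2, THEN conjunct2, THEN conjunct2, THEN conjunct2, THEN conjunct2, THEN conjunct2, THEN conjunct1]
lemmas ptri_raw = PA_all[THEN conjunct2, THEN conjunct2, THEN conjunct2, THEN conjunct2, THEN conjunct2, THEN conjunct2, THEN conjunct2, THEN conjunct2, THEN conjunct2, THEN conjunct1]
lemmas pmono_raw = PA_all[THEN conjunct2, THEN conjunct2, THEN conjunct2, THEN conjunct2, THEN conjunct2, THEN conjunct2, THEN conjunct2, THEN conjunct2, THEN conjunct2, THEN conjunct2, THEN conjunct1]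
lemmas pmulmono_raw = PA_all[THEN conjunct2, THEN conjunct2, THEN conjunct2, THEN conjunct2, THEN conjunct2, THEN conjunct2, THEN conjunct2, THEN conjunct2, THEN conjunct2, THEN conjunct2, THEN conjunct2, THEN conjunct1]
lemmas pdiff_raw = PA_all[THEN conjunct2, THEN conjunct2, THEN conjunct2, THEN conjunct2, THEN conjunct2, THEN conjunct2, THEN conjunct2, THEN conjunct2, THEN conjunct2, THEN conjunct2, THEN conjunct2, THEN conjunct2, THEN conjunct1]
lemmas p01disc_raw = PA_all[THEN conjunct2, THEN conjunct2, THEN conjunct2, THEN conjunct2, THEN conjunct2, THEN conjunct2, THEN conjunct2, THEN conjunct2, THEN conjunct2, THEN conjunct2, THEN conjunct2, THEN conjunct2, THEN conjunct2, THEN conjunct1]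
lemmas pge0_raw = PA_all[THEN conjunct2, THEN conjunct2, THEN conjunct2, THEN conjunct2, THEN conjunct2, THEN conjunct2, THEN conjunct2, THEN conjunct2, THEN conjunct2, THEN conjunct2, THEN conjunct2, THEN conjunct2, THEN conjunct2, THEN conjunct2]

lemma padd_assoc: "nplus A (nplus A x y) w = nplus A x (nplus A y w)"
  using padd_assoc_raw by blast
lemma padd_comm: "nplus A x y = nplus A y x"
  using padd_comm_raw by blast
lemma pdistr: "ntimes A x (nplus A y w) = nplus A (ntimes A x y) (ntimes A x w)"
  using pdistr_raw by blast
lemma padd0: "nplus A x (nzero A) = x"
  using padd0mul0_raw by blast
lemma pmul0: "ntimes A x (nzero A) = nzero A"
  using padd0mul0_raw by blast
lemma pmul1: "ntimes A x (none A) = x"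
  using pmul1_raw by blast
lemma ptrans: "nless A x y \<Longrightarrow> nless A y w \<Longrightarrow> nless A x w"
  using ptrans_raw by blast
lemma pirr: "\<not> nless A x x"
  using pirr_raw by blast
lemma ptri: "nless A x y \<or> x = y \<or> nless A y x"
  using ptri_raw by blast
lemma pmono: "nless A x y \<Longrightarrow> nless A (nplus A x w) (nplus A y w)"
  using pmono_raw by blast
lemma pdiff: "nless A x y \<Longrightarrow> \<exists>w. nplus A x w = y"
  using pdiff_raw by blast
lemma p01: "nless A (nzero A) (none A)"
  using p01disc_raw by blast
lemma pdisc: "nless A (nzero A) x \<Longrightarrow> nless A (none A) x \<or> none A = x"
  using p01disc_raw by blast
lemma pge0: "nless A (nzero A) x \<or> nzero A = x"
  using pge0_raw by blast

lemma natN_add: "natN A (a + b) = nplus A (natN A a) (natN A b)"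
  by (induction b) (simp_all add: padd0 padd_assoc)

lemma natN_mul: "natN A (a * b) = ntimes A (natN A a) (natN A b)"
proof (induction b)
  case 0 then show ?case by (simp add: pmul0)
next
  case (Suc b)
  have "natN A (a * Suc b) = natN A (a * b + a)" by (simp add: add.commute)
  also have "\<dots> = nplus A (ntimes A (natN A a) (natN A b)) (natN A a)"
    by (simp add: natN_add Suc)
  finally show ?case by (simp add: pdistr pmul1)
qed

lemma z_plus: "nplus A (nzero A) x = x"
  by (subst padd_comm) (rule padd0)

lemma natN_pos: "nless A (nzero A) (natN A (Suc c))"
proof -
  have h: "nless A (nzero A) (natN A c) \<or> nzero A = natN A c" by (rule pge0)
  then show ?thesis
  proof
    assume "nless A (nzero A) (natN A c)"
    then have "nless A (nplus A (nzero A) (none A)) (nplus A (natN A c) (none A))" by (rule pmono)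
    then have "nless A (none A) (natN A (Suc c))" by (simp add: z_plus)
    then show ?thesis using p01 ptrans by blast
  next
    assume h: "nzero A = natN A c"
    have "natN A (Suc c) = nplus A (nzero A) (none A)" using h by simp
    then have "natN A (Suc c) = none A" by (simp only: z_plus)
    then show ?thesis using p01 by simp
  qed
qed

lemma natN_less: "a < b \<Longrightarrow> nless A (natN A a) (natN A b)"
proof -
  assume "a < b"
  define c where "c = b - a - 1"
  have b: "b = a + Suc c" using \<open>a < b\<close> unfolding c_def by arith
  have "nless A (nplus A (nzero A) (natN A a)) (nplus A (natN A (Suc c)) (natN A a))"
    using natN_pos by (rule pmono)
  then have "nless A (natN A a) (nplus A (natN A (Suc c)) (natN A a))"
    unfolding z_plus .
  then show ?thesis
    unfolding b natN_add padd_comm[of "natN A a" "natN A (Suc c)"] .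
qed

lemma natN_less_iff: "nless A (natN A a) (natN A b) \<longleftrightarrow> a < b"
proof
  assume h: "nless A (natN A a) (natN A b)"
  show "a < b"
  proof (rule ccontr)
    assume "\<not> a < b"
    then have "b < a \<or> a = b" by auto
    then show False
    proof
      assume "b < a"
      then have "nless A (natN A b) (natN A a)" by (rule natN_less)
      then have "nless A (natN A a) (natN A a)" using h ptrans by blast
      then show False using pirr by blast
    next
      assume "a = b" then show False using h pirr by simp
    qed
  qed
qed (rule natN_less)

lemma natN_inj: "inj (natN A)"
proof (rule injI)
  fix a b assume h: "natN A a = natN A b"
  show "a = b"
  proof (rule ccontr)
    assume "a \<noteq> b"
    then have "a < b \<or> b < a" by auto
    then have "nless A (natN A a) (natN A b) \<or> nless A (natN A b) (natN A a)" using natN_less by blast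
    then show False using h pirr by simp
  qed
qed

lemma less_succ: "nless A x (nplus A y (none A)) \<Longrightarrow> nless A x y \<or> x = y"
proof (rule ccontr)
  assume a: "nless A x (nplus A y (none A))" and b: "\<not> (nless A x y \<or> x = y)"
  have yx: "nless A y x" using ptri[of x y] b by blast
  obtain w where w: "nplus A y w = x" using pdiff[OF yx] by blast
  have wz: "w \<noteq> nzero A"
  proof
    assume "w = nzero A"
    with w have "x = y" by (simp add: padd0)
    with b show False by simp
  qed
  have "nless A (nzero A) w" using pge0[of w] wz by blast
  then have disj: "nless A (none A) w \<or> none A = w" by (rule pdisc)
  have "nless A (nplus A y (none A)) x \<or> nplus A y (none A) = x"
    using disj
  proof
    assume "nless A (none A) w"
    then have "nless A (nplus A (none A) y) (nplus A w y)" by (rule pmono)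
    then have "nless A (nplus A y (none A)) (nplus A y w)"
      unfolding padd_comm[of "none A" y] padd_comm[of w y] .
    then show ?thesis unfolding w by (rule disjI1)
  next
    assume "none A = w"
    then show ?thesis using w by simp
  qed
  then show False
  proof
    assume "nless A (nplus A y (none A)) x"
    then have "nless A x x" using a by (rule ptrans[rotated])
    then show False using pirr by simp
  next
    assume "nplus A y (none A) = x"
    then have "nless A x x" using a by simp
    then show False using pirr by simp
  qed
qed

lemma end_ext: "nless A a (natN A k) \<Longrightarrow> a \<in> range (natN A)"
proof (induction k arbitrary: a)
  case 0
  then have h: "nless A a (nzero A)" by simp
  have "nless A (nzero A) a \<or> nzero A = a" by (rule pge0)
  then have "nless A (nzero A) (nzero A)"
  proof
    assume "nless A (nzero A) a" then show ?thesis using h by (rule ptrans)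
  next
    assume "nzero A = a" then show ?thesis using h by simp
  qed
  then show ?case using pirr by simp
next
  case (Suc k)
  then have "nless A a (nplus A (natN A k) (none A))" by simp
  then have "nless A a (natN A k) \<or> a = natN A k" by (rule less_succ)
  then show ?case
  proof
    assume "nless A a (natN A k)" then show ?case by (rule Suc.IH)
  next
    assume "a = natN A k" then show ?case by simp
  qed
qed

end

lemma star_tup_emb: "tup_emb (std_star Rm Fm R g) A eN eT = tup_emb (std_tup Rm Fm) A eN eT"
  unfolding tup_emb_def std_tup_def std_star_def by simp

definition tupT :: "('r,'f,'m,'n,'t,'z) tup_str_scheme \<Rightarrow> 'm list \<Rightarrow> 't" where
  "tupT A xs = (THE \<pi>. len A \<pi> = natN A (length xs) \<and> (\<forall>i<length xs. ind A \<pi> (natN A i) (xs ! i)))"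

context
  fixes A :: "('r,'f,'m,'n,'t,'z) tup_str_scheme"
  assumes T: "T_tup A"
begin

lemma T_all: "PA_minus A \<and>
    (\<forall>\<pi> i m. ind A \<pi> i m \<longrightarrow> nless A i (len A \<pi>)) \<and>
    (\<forall>\<pi> i m m'. ind A \<pi> i m \<and> ind A \<pi> i m' \<longrightarrow> m = m') \<and>
    (\<forall>\<pi> i. nless A i (len A \<pi>) \<longrightarrow> (\<exists>m. ind A \<pi> i m)) \<and>
    (\<forall>\<pi> \<rho>. len A \<pi> = len A \<rho> \<and>
        (\<forall>i. nless A i (len A \<pi>) \<longrightarrow> (\<exists>m. ind A \<pi> i m \<and> ind A \<rho> i m)) \<longrightarrow> \<pi> = \<rho>) \<and>
    (\<exists>\<pi>. len A \<pi> = nzero A) \<and>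
    (\<forall>\<pi> m. \<exists>\<rho>. len A \<rho> = nplus A (len A \<pi>) (none A) \<and> ind A \<rho> (len A \<pi>) m \<and>
        (\<forall>i m'. nless A i (len A \<pi>) \<longrightarrow> (ind A \<pi> i m' \<longleftrightarrow> ind A \<rho> i m'))) \<and>
    (\<forall>\<pi>. (nless A (none A) (len A \<pi>) \<or> none A = len A \<pi>) \<longrightarrow>
        (\<exists>\<rho>. nplus A (len A \<rho>) (none A) = len A \<pi> \<and>
           (\<forall>i m. nless A i (len A \<rho>) \<longrightarrow> (ind A \<pi> i m \<longleftrightarrow> ind A \<rho> i m))))"
  using T unfolding T_tup_def .

lemmas TPA = T_all[THEN conjunct1]
lemmas Ta_raw = T_all[THEN conjunct2, THEN conjunct1]
lemmas Tb_raw = T_all[THEN conjunct2, THEN conjunct2, THEN conjunct1]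
lemmas Tc_raw = T_all[THEN conjunct2, THEN conjunct2, THEN conjunct2, THEN conjunct1]
lemmas Td_raw = T_all[THEN conjunct2, THEN conjunct2, THEN conjunct2, THEN conjunct2, THEN conjunct1]
lemmas Te_raw = T_all[THEN conjunct2, THEN conjunct2, THEN conjunct2, THEN conjunct2, THEN conjunct2, THEN conjunct1]
lemmas Tf_raw = T_all[THEN conjunct2, THEN conjunct2, THEN conjunct2, THEN conjunct2, THEN conjunct2, THEN conjunct2, THEN conjunct1]

lemma Ta: "ind A \<pi> i m \<Longrightarrow> nless A i (len A \<pi>)"
  using Ta_raw by blast
lemma Tb: "ind A \<pi> i m \<Longrightarrow> ind A \<pi> i m' \<Longrightarrow> m = m'"
  using Tb_raw by blast
lemma Tc: "nless A i (len A \<pi>) \<Longrightarrow> \<exists>m. ind A \<pi> i m"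
  using Tc_raw by blast
lemma Td: "len A \<pi> = len A \<rho> \<Longrightarrow>
    (\<And>i. nless A i (len A \<pi>) \<Longrightarrow> \<exists>m. ind A \<pi> i m \<and> ind A \<rho> i m) \<Longrightarrow> \<pi> = \<rho>"
  using Td_raw by blast
lemma Tf: "\<exists>\<rho>. len A \<rho> = nplus A (len A \<pi>) (none A) \<and> ind A \<rho> (len A \<pi>) m \<and>
        (\<forall>i m'. nless A i (len A \<pi>) \<longrightarrow> (ind A \<pi> i m' \<longleftrightarrow> ind A \<rho> i m'))"
  using Tf_raw by blast

definition chr :: "'m list \<Rightarrow> 't \<Rightarrow> bool" where
  "chr xs \<pi> \<longleftrightarrow> len A \<pi> = natN A (length xs) \<and> (\<forall>i<length xs. ind A \<pi> (natN A i) (xs ! i))"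

lemma chr_unique: "chr xs \<pi> \<Longrightarrow> chr xs \<rho> \<Longrightarrow> \<pi> = \<rho>"
proof -
  assume p: "chr xs \<pi>" and r: "chr xs \<rho>"
  show "\<pi> = \<rho>"
  proof (rule Td)
    show "len A \<pi> = len A \<rho>" using p r unfolding chr_def by simp
  next
    fix j assume j: "nless A j (len A \<pi>)"
    then have j': "nless A j (natN A (length xs))" using p unfolding chr_def by simp
    then obtain i where ji: "j = natN A i" using end_ext[OF TPA] by blast
    then have "i < length xs" using j' natN_less_iff[OF TPA] by simp
    then have "ind A \<pi> j (xs ! i) \<and> ind A \<rho> j (xs ! i)" using p r ji unfolding chr_def by simp
    then show "\<exists>m. ind A \<pi> j m \<and> ind A \<rho> j m" by blast
  qed
qed

lemma chr_ex: "\<exists>\<pi>. chr xs \<pi>"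
proof (induction xs rule: rev_induct)
  case Nil
  obtain \<pi> where "len A \<pi> = nzero A" using Te_raw by blast
  then have "chr [] \<pi>" unfolding chr_def by simp
  then show ?case by blast
next
  case (snoc x xs)
  then obtain \<pi> where p: "chr xs \<pi>" by blast
  obtain \<rho> where r1: "len A \<rho> = nplus A (len A \<pi>) (none A)" and r2: "ind A \<rho> (len A \<pi>) x"
    and r3: "\<forall>i m'. nless A i (len A \<pi>) \<longrightarrow> (ind A \<pi> i m' \<longleftrightarrow> ind A \<rho> i m')"
    using Tf[of \<pi> x] by blast
  have lp: "len A \<pi> = natN A (length xs)" using p unfolding chr_def by simp
  have "chr (xs @ [x]) \<rho>"
    unfolding chr_def
  proof (intro conjI allI impI)
    show "len A \<rho> = natN A (length (xs @ [x]))" using r1 lp by simp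
  next
    fix i assume i: "i < length (xs @ [x])"
    show "ind A \<rho> (natN A i) ((xs @ [x]) ! i)"
    proof (cases "i < length xs")
      case True
      then have "ind A \<pi> (natN A i) (xs ! i)" using p unfolding chr_def by simp
      moreover have "nless A (natN A i) (len A \<pi>)" using True lp natN_less_iff[OF TPA] by simp
      ultimately show ?thesis using r3 True by (simp add: nth_append)
    next
      case False
      then have "i = length xs" using i by simp
      then show ?thesis using r2 lp by simp
    qed
  qed
  then show ?case by blast
qed

lemma tupT_chr: "chr xs (tupT A xs)"
proof -
  have "chr xs (THE \<pi>. chr xs \<pi>)"
    using chr_ex chr_unique by (metis theI)
  then show ?thesis unfolding tupT_def chr_def .
qed

lemma emb_ex: "tup_emb (std_tup Rm Fm) A (natN A) (tupT A)" if "trel A = Rm" "tfun A = Fm"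
  unfolding tup_emb_def
proof (intro conjI allI)
  show "inj (natN A)" by (rule natN_inj[OF TPA])
next
  show "inj (tupT A)"
  proof (rule injI)
    fix xs ys assume e: "tupT A xs = tupT A ys"
    have cx: "chr xs (tupT A xs)" and cy: "chr ys (tupT A ys)" by (rule tupT_chr)+
    have "natN A (length xs) = natN A (length ys)" using cx cy e unfolding chr_def by simp
    then have l: "length xs = length ys" using natN_inj[OF TPA] by (simp add: inj_eq)
    show "xs = ys"
    proof (rule nth_equalityI)
      show "length xs = length ys" by (rule l)
    next
      fix i assume "i < length xs"
      then have "ind A (tupT A xs) (natN A i) (xs ! i)" "ind A (tupT A xs) (natN A i) (ys ! i)"
        using cx cy e l unfolding chr_def by auto
      then show "xs ! i = ys ! i" by (rule Tb)
    qed
  qed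
next
  fix xs :: "'m list"
  have "chr xs (tupT A xs)" by (rule tupT_chr)
  then show "natN A (len (std_tup Rm Fm) xs) = len A (tupT A xs)"
    unfolding chr_def std_tup_def by simp
next
  fix xs :: "'m list" and i m
  have c: "chr xs (tupT A xs)" by (rule tupT_chr)
  show "ind (std_tup Rm Fm) xs i m = ind A (tupT A xs) (natN A i) m"
  proof
    assume "ind (std_tup Rm Fm) xs i m"
    then have "i < length xs" "xs ! i = m" unfolding std_tup_def by simp_all
    then show "ind A (tupT A xs) (natN A i) m" using c unfolding chr_def by auto
  next
    assume h: "ind A (tupT A xs) (natN A i) m"
    then have "nless A (natN A i) (len A (tupT A xs))" by (rule Ta)
    then have il: "i < length xs" using c natN_less_iff[OF TPA] unfolding chr_def by simp
    then have "ind A (tupT A xs) (natN A i) (xs ! i)" using c unfolding chr_def by simp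
    then have "xs ! i = m" using h by (rule Tb)
    then show "ind (std_tup Rm Fm) xs i m" using il unfolding std_tup_def by simp
  qed
next
  fix a b
  show "natN A (nplus (std_tup Rm Fm) a b) = nplus A (natN A a) (natN A b)"
    unfolding std_tup_def by (simp add: natN_add[OF TPA])
  show "natN A (ntimes (std_tup Rm Fm) a b) = ntimes A (natN A a) (natN A b)"
    unfolding std_tup_def by (simp add: natN_mul[OF TPA])
  show "nless (std_tup Rm Fm) a b = nless A (natN A a) (natN A b)"
    unfolding std_tup_def by (simp add: natN_less_iff[OF TPA])
qed (use that in \<open>simp_all add: std_tup_def z_plus[OF TPA]\<close>)

lemma emb_uniq:
  assumes e: "tup_emb (std_tup Rm Fm) A eN eT"
  shows "eN = natN A \<and> eT = tupT A"
proof -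
  have N: "eN k = natN A k" for k
  proof (induction k)
    case 0
    then show ?case using e unfolding tup_emb_def std_tup_def by simp
  next
    case (Suc k)
    have "eN (Suc k) = eN (nplus (std_tup Rm Fm) k 1)" unfolding std_tup_def by simp
    also have "\<dots> = nplus A (eN k) (eN 1)" using e unfolding tup_emb_def by blast
    also have "eN 1 = none A" using e unfolding tup_emb_def std_tup_def by simp
    finally show ?case using Suc by simp
  qed
  have "eT xs = tupT A xs" for xs
  proof (rule chr_unique)
    show "chr xs (tupT A xs)" by (rule tupT_chr)
    have l: "len A (eT xs) = eN (length xs)" using e unfolding tup_emb_def std_tup_def by simp
    have I: "\<forall>\<pi> i m. ind (std_tup Rm Fm) \<pi> i m \<longleftrightarrow> ind A (eT \<pi>) (eN i) m"
      using e unfolding tup_emb_def by blast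
    have "ind A (eT xs) (eN i) (xs ! i)" if "i < length xs" for i
      using I[rule_format, of xs i "xs ! i"] that by (simp add: std_tup_def)
    then show "chr xs (eT xs)" using l N unfolding chr_def by simp
  qed
  then show ?thesis using N by auto
qed

lemma all_tuples: "len A \<pi> = natN A n \<Longrightarrow> \<pi> \<in> range (tupT A)"
proof -
  assume l: "len A \<pi> = natN A n"
  define xs where "xs = map (\<lambda>i. SOME m. ind A \<pi> (natN A i) m) [0..<n]"
  have "chr xs \<pi>"
    unfolding chr_def
  proof (intro conjI allI impI)
    show "len A \<pi> = natN A (length xs)" using l unfolding xs_def by simp
  next
    fix i assume i: "i < length xs"
    then have "i < n" unfolding xs_def by simp
    then have "nless A (natN A i) (len A \<pi>)" using l natN_less_iff[OF TPA] by simp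
    then have "\<exists>m. ind A \<pi> (natN A i) m" by (rule Tc)
    then have "ind A \<pi> (natN A i) (SOME m. ind A \<pi> (natN A i) m)" by (rule someI_ex)
    then show "ind A \<pi> (natN A i) (xs ! i)" using \<open>i < n\<close> unfolding xs_def by simp
  qed
  then have "\<pi> = tupT A xs" using tupT_chr chr_unique by blast
  then show ?thesis by simp
qed

end

theorem lemma5p5:
  fixes A :: "('r::countable,'f::countable,'m,'n,'t) tup_star"
    and Rm :: "'r \<Rightarrow> 'm list \<Rightarrow> bool" and Fm :: "'f \<Rightarrow> 'm list \<Rightarrow> 'm"
  assumes "T_tup A"
    and "trel A = Rm" and "tfun A = Fm"
  shows "(\<exists>!e. tup_emb (std_tup Rm Fm) A (fst e) (snd e)) \<and>
    (\<forall>eN eT. tup_emb (std_tup Rm Fm) A eN eT \<longrightarrow>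
       star_emb (std_star Rm Fm (\<lambda>n. Rel A (eN n)) (\<lambda>n \<pi>. gfun A (eN n) (eT \<pi>))) A eN eT \<and>
       (\<forall>a k. nless A a (eN k) \<longrightarrow> a \<in> range eN) \<and>
       (\<forall>\<pi>. len A \<pi> \<in> range eN \<longrightarrow> \<pi> \<in> range eT))"
proof -
  have E: "tup_emb (std_tup Rm Fm) A (natN A) (tupT A)" using emb_ex[OF assms] .
  have P: "PA_minus A" using TPA[OF assms(1)] .
  show ?thesis
  proof (intro conjI allI impI)
    show "\<exists>!e. tup_emb (std_tup Rm Fm) A (fst e) (snd e)"
    proof (rule ex1I[of _ "(natN A, tupT A)"])
      show "tup_emb (std_tup Rm Fm) A (fst (natN A, tupT A)) (snd (natN A, tupT A))" using E by simp
    next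
      fix e assume "tup_emb (std_tup Rm Fm) A (fst e) (snd e)"
      then have "fst e = natN A \<and> snd e = tupT A" by (rule emb_uniq[OF assms(1)])
      then show "e = (natN A, tupT A)" by (simp add: prod_eq_iff)
    qed
  next
    fix eN eT assume e: "tup_emb (std_tup Rm Fm) A eN eT"
    have "tup_emb (std_star Rm Fm (\<lambda>n. Rel A (eN n)) (\<lambda>n \<pi>. gfun A (eN n) (eT \<pi>))) A eN eT"
      using e unfolding star_tup_emb .
    then show "star_emb (std_star Rm Fm (\<lambda>n. Rel A (eN n)) (\<lambda>n \<pi>. gfun A (eN n) (eT \<pi>))) A eN eT"
      unfolding star_emb_def std_star_def by simp
  next
    fix eN eT a k assume e: "tup_emb (std_tup Rm Fm) A eN eT" and h: "nless A a (eN k)"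
    have u: "eN = natN A" using emb_uniq[OF assms(1) e] by blast
    show "a \<in> range eN" using end_ext[OF P] h unfolding u by blast
  next
    fix eN eT \<pi> assume e: "tup_emb (std_tup Rm Fm) A eN eT" and h: "len A \<pi> \<in> range eN"
    have u: "eN = natN A" "eT = tupT A" using emb_uniq[OF assms(1) e] by blast+
    then obtain n where "len A \<pi> = natN A n" using h by blast
    then show "\<pi> \<in> range eT" unfolding u by (rule all_tuples[OF assms(1)])
  qed
qed


end
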